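(* Let $c\ge 1$, let $n\ge 9$, and let $\bar q$ be a positive integer divisible by $8$ with $\bar q\le 4\sqrt n$. Consider a sequence of coordinates $k_1,k_2,\dots$, each chosen independently and uniformly at random from $\{1,\dots,n\}$, and let $I$ be any block of $\bar q/4$ consecutive terms of it. Then with probability at least $1-\frac13 n^{-2c}$, there are at most $b_3=1+\ln 3+2c\ln n$ reappearing coordinates among the terms of $I$.
   Context: A term of the block is reappearing if the same coordinate already occurs at an earlier position within the block. *)

theory Defs
  imports "HOL-Probability.Probability"
begin

text \<open>The random coordinate sequence k_1, k_2, ... (indexed from 0 here):
  infinite product of independent uniform distributions on {1..n}.\<close>
definition coord_seq_space :: "nat \<Rightarrow> (nat \<Rightarrow> nat) measure" where
  "coord_seq_space n = PiM UNIV (\<lambda>_. measure_pmf (pmf_of_set {1..n}))"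

definition reappearing_count :: "(nat \<Rightarrow> nat) \<Rightarrow> nat \<Rightarrow> nat \<Rightarrow> nat" where
  "reappearing_count k s m = card {j \<in> {s..<s+m}. \<exists>i\<in>{s..<j}. k i = k j}"

end

theory Submission imports Defs begin

lemma count_bound:
  fixes n m s r :: nat
  shows "card {f \<in> PiE {s..<s+m} (\<lambda>_. {1..n}). r \<le> reappearing_count f s m}
           \<le> (m choose r) * m^r * n^(m-r)"
proof -
  define B where "B = {s..<s+m}"
  define S where "S = PiE B (\<lambda>_. {1..n::nat})"
  define Y where "Y = (\<lambda>J (g::nat\<Rightarrow>nat). {f \<in> S. \<forall>j\<in>J. f j = f (g j)})"
  define Js where "Js = {J. J \<subseteq> B \<and> card J = r}"
  have finS: "finite S" unfolding S_def B_def by (intro finite_PiE) auto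
  have finB: "finite B" "card B = m" unfolding B_def by auto
  have sub: "{f \<in> S. r \<le> reappearing_count f s m} \<subseteq> (\<Union>J\<in>Js. \<Union>g\<in>PiE J (\<lambda>_. B - J). Y J g)"
  proof
    fix f assume "f \<in> {f \<in> S. r \<le> reappearing_count f s m}"
    hence fS: "f \<in> S" and rc: "r \<le> card {j \<in> B. \<exists>i\<in>{s..<j}. f i = f j}"
      unfolding reappearing_count_def B_def by auto
    let ?Rs = "{j \<in> B. \<exists>i\<in>{s..<j}. f i = f j}"
    have "finite ?Rs" using finB by auto
    then obtain J where J: "J \<subseteq> ?Rs" "card J = r"
      using obtain_subset_with_card_n[OF rc] by blast
    define g where "g = restrict (\<lambda>j. Min {i\<in>B. f i = f j}) J"
    have key: "Min {i\<in>B. f i = f j} \<in> B - J \<and> f (Min {i\<in>B. f i = f j}) = f j" if "j \<in> J" for j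
    proof -
      let ?T = "{i\<in>B. f i = f j}"
      have jB: "j \<in> B" using that J by auto
      have ft: "finite ?T" using finB by auto
      have ne: "?T \<noteq> {}" using jB by auto
      have mem: "Min ?T \<in> ?T" using Min_in[OF ft ne] .
      have notJ: "Min ?T \<notin> J"
      proof
        assume "Min ?T \<in> J"
        then obtain i where i: "i \<in> {s..<Min ?T}" "f i = f (Min ?T)" using J by blast
        have "i \<in> ?T" using i mem unfolding B_def by auto
        hence "Min ?T \<le> i" using ft by auto
        thus False using i by auto
      qed
      show ?thesis using mem notJ by auto
    qed
    have "J \<in> Js" using J unfolding Js_def by auto
    moreover have "g \<in> PiE J (\<lambda>_. B - J)" unfolding g_def using key by auto
    moreover have "f \<in> Y J g" unfolding Y_def g_def using key fS by auto
    ultimately show "f \<in> (\<Union>J\<in>Js. \<Union>g\<in>PiE J (\<lambda>_. B - J). Y J g)" by blast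
  qed
  have finJs: "finite Js" unfolding Js_def using finB by auto
  have finPi: "finite (PiE J (\<lambda>_. B - J))" if "J \<in> Js" for J
    using that finB unfolding Js_def by (intro finite_PiE) (auto intro: finite_subset)
  have finY: "finite (Y J g)" for J g unfolding Y_def using finS by auto
  have cardY: "card (Y J g) \<le> n^(m-r)" if "J \<in> Js" "g \<in> PiE J (\<lambda>_. B - J)" for J g
  proof -
    have JB: "J \<subseteq> B" "card J = r" using that unfolding Js_def by auto
    have "inj_on (\<lambda>f. restrict f (B - J)) (Y J g)"
    proof (rule inj_onI)
      fix f1 f2 assume f1: "f1 \<in> Y J g" and f2: "f2 \<in> Y J g"
        and eq: "restrict f1 (B - J) = restrict f2 (B - J)"
      show "f1 = f2"
      proof
        fix i
        show "f1 i = f2 i"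
        proof (cases "i \<in> B")
          case False
          thus ?thesis using f1 f2 unfolding Y_def S_def by (auto simp: PiE_def extensional_def)
        next
          case True
          show ?thesis
          proof (cases "i \<in> J")
            case False
            thus ?thesis using True eq by (metis Diff_iff restrict_apply')
          next
            case iJ: True
            have gi: "g i \<in> B - J" using that(2) iJ by auto
            have "f1 i = f1 (g i)" "f2 i = f2 (g i)" using f1 f2 iJ unfolding Y_def by auto
            moreover have "f1 (g i) = f2 (g i)" using eq gi by (metis restrict_apply')
            ultimately show ?thesis by simp
          qed
        qed
      qed
    qed
    moreover have "(\<lambda>f. restrict f (B - J)) ` Y J g \<subseteq> PiE (B - J) (\<lambda>_. {1..n})"
      unfolding Y_def S_def by auto
    moreover have "finite (PiE (B - J) (\<lambda>_. {1..n}))" using finB by (intro finite_PiE) auto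
    ultimately have "card (Y J g) \<le> card (PiE (B - J) (\<lambda>_. {1..n}))" by (rule card_inj_on_le)
    also have "\<dots> = n ^ (m - r)"
      using finB JB by (simp add: card_PiE card_Diff_subset finite_subset)
    finally show ?thesis .
  qed
  have cardPi: "card (PiE J (\<lambda>_. B - J)) \<le> m ^ r" if "J \<in> Js" for J
  proof -
    have JB: "J \<subseteq> B" "card J = r" using that unfolding Js_def by auto
    have "card (PiE J (\<lambda>_. B - J)) = (m - r) ^ r"
      using finB JB by (simp add: card_PiE card_Diff_subset finite_subset)
    also have "\<dots> \<le> m ^ r" by (intro power_mono) auto
    finally show ?thesis .
  qed
  have "card {f \<in> S. r \<le> reappearing_count f s m} \<le> card (\<Union>J\<in>Js. \<Union>g\<in>PiE J (\<lambda>_. B - J). Y J g)"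
    using sub finJs finPi finY by (intro card_mono) auto
  also have "\<dots> \<le> (\<Sum>J\<in>Js. card (\<Union>g\<in>PiE J (\<lambda>_. B - J). Y J g))"
    using finJs by (rule card_UN_le)
  also have "\<dots> \<le> (\<Sum>J\<in>Js. \<Sum>g\<in>PiE J (\<lambda>_. B - J). card (Y J g))"
    using finPi by (intro sum_mono card_UN_le) auto
  also have "\<dots> \<le> (\<Sum>J\<in>Js. \<Sum>g\<in>PiE J (\<lambda>_. B - J). n^(m-r))"
    using cardY by (intro sum_mono) auto
  also have "\<dots> = (\<Sum>J\<in>Js. card (PiE J (\<lambda>_. B - J)) * n^(m-r))" by simp
  also have "\<dots> \<le> (\<Sum>J\<in>Js. m^r * n^(m-r))"
    using cardPi by (intro sum_mono mult_right_mono) auto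
  also have "\<dots> = card Js * (m^r * n^(m-r))" by simp
  also have "card Js = m choose r" unfolding Js_def using finB n_subsets by metis
  finally show ?thesis unfolding S_def B_def by (simp add: mult.assoc)
qed


lemma exp_le_fact:
  fixes r :: nat assumes "r \<ge> 4" shows "exp (real r - 1) \<le> fact r"
  using assms
proof (induction r rule: dec_induct)
  case base
  have "exp (3::real) = exp 1 ^ 3" by (simp add: exp_of_nat_mult[symmetric])
  also have "\<dots> \<le> (272/100) ^ 3" using e_less_272 by (intro power_mono) auto
  also have "\<dots> \<le> 24" by (simp add: power_divide)
  finally show ?case by (simp add: fact_numeral)
next
  case (step r)
  have "exp (real (Suc r) - 1) = exp (real r - 1) * exp 1" by (simp add: exp_add[symmetric])
  also have "\<dots> \<le> fact r * (real r + 1)"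
    using step e_less_272 by (intro mult_mono) auto
  also have "\<dots> = fact (Suc r)" by (simp add: algebra_simps)
  finally show ?case .
qed

lemma reapp_restrict:
  "reappearing_count (restrict k {s..<s+m}) s m = reappearing_count k s m"
  unfolding reappearing_count_def by (intro arg_cong[where f=card]) auto

lemma nat_floor_aux: "(w::int) < int x \<Longrightarrow> 0 \<le> w \<Longrightarrow> nat w + 1 \<le> x" by arith

theorem corollary1:
  fixes c :: real and n qbar s :: nat
  assumes "c \<ge> 1" and "n \<ge> 9" and "qbar > 0" and "8 dvd qbar"
    and "real qbar \<le> 4 * sqrt (real n)"
  shows "measure (coord_seq_space n)
           {k \<in> space (coord_seq_space n).
              real (reappearing_count k s (qbar div 4)) \<le> 1 + ln 3 + 2 * c * ln (real n)}
         \<ge> 1 - (1/3) * real n powr (-2 * c)"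
proof -
  define m where "m = qbar div 4"
  define b where "b = 1 + ln 3 + 2 * c * ln (real n)"
  define r where "r = nat \<lfloor>b\<rfloor> + 1"
  define M where "M = (\<lambda>_::nat. measure_pmf (pmf_of_set {1..n}))"
  define P where "P = coord_seq_space n"
  define B where "B = {s..<s+m}"
  define R where "R = (\<lambda>k. reappearing_count k s m)"
  have P_def': "P = PiM UNIV M" unfolding P_def M_def coord_seq_space_def by simp
  have npos: "n > 0" using assms by auto
  have Mprob: "prob_space (M i)" for i unfolding M_def by (rule prob_space_measure_pmf)
  interpret P: prob_space P unfolding P_def' by (rule prob_space_PiM) (rule Mprob)
  have spP: "space P = UNIV" unfolding P_def' M_def by (simp add: space_PiM)
  have finB: "finite B" unfolding B_def by simp
  have setsM: "sets (M i) = UNIV" for i unfolding M_def by simp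
  have RR: "R (restrict k B) = R k" for k unfolding R_def B_def by (rule reapp_restrict)
  have emb_eq: "prod_emb UNIV M B X = {k. restrict k B \<in> X}" for X
    unfolding prod_emb_def M_def by auto
  have setsB: "X \<in> sets (PiM B M)" if "X \<subseteq> PiE B (\<lambda>_. UNIV)" for X
  proof (rule sets.countable)
    fix a assume "a \<in> X"
    hence "{a} = PiE B (\<lambda>i. {a i})" using that by (force simp: PiE_iff extensional_def fun_eq_iff)
    thus "{a} \<in> sets (PiM B M)" using finB setsM by (metis UNIV_I sets_PiM_I_finite)
  next
    have "countable (PiE B (\<lambda>_. UNIV :: nat set))" using finB by (intro countable_PiE) auto
    thus "countable X" using that countable_subset by blast
  qed
  have setsEmb: "prod_emb UNIV M B X \<in> P.events" if "X \<subseteq> PiE B (\<lambda>_. UNIV)" for X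
    unfolding P_def' using setsB[OF that] by (intro measurable_prod_emb) auto
  define good where "good = {k \<in> space P. real (R k) \<le> b}"
  have good_eq: "good = prod_emb UNIV M B {f \<in> PiE B (\<lambda>_. UNIV). real (R f) \<le> b}"
    unfolding good_def emb_eq spP using RR by auto
  have good_ev: "good \<in> P.events" unfolding good_eq by (rule setsEmb) auto
  define X' where "X' = {f \<in> PiE B (\<lambda>_. {1..n}). r \<le> R f}"
  define G where "G = prod_emb UNIV M B (PiE B (\<lambda>_. {1..n}))"
  have G_ev: "G \<in> P.events" unfolding G_def by (rule setsEmb) auto
  have finX': "finite X'" unfolding X'_def using finB by (intro finite_subset[OF _ finite_PiE[of B "\<lambda>_. {1..n}"]]) auto
  have emb_single: "P.prob (prod_emb UNIV M B {f}) = (1 / real n) ^ m" if "f \<in> X'" for f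
  proof -
    have "{f} = PiE B (\<lambda>i. {f i})" using that unfolding X'_def by (force simp: PiE_iff extensional_def fun_eq_iff)
    hence "emeasure P (prod_emb UNIV M B {f}) = (\<Prod>i\<in>B. emeasure (M i) {f i})"
      unfolding P_def' using finB Mprob setsM by (simp add: emeasure_PiM_emb)
    also have "\<dots> = (\<Prod>i\<in>B. ennreal (1 / real n))"
    proof (intro prod.cong refl)
      fix i assume "i \<in> B"
      hence "f i \<in> {1..n}" using that unfolding X'_def by auto
      thus "emeasure (M i) {f i} = ennreal (1 / real n)"
        unfolding M_def using npos by (simp add: measure_pmf.emeasure_eq_measure measure_pmf_of_set)
    qed
    also have "\<dots> = ennreal ((1 / real n) ^ m)" using finB by (simp add: B_def ennreal_power)
    finally show ?thesis by (simp add: P.emeasure_eq_measure)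
  qed
  have G1: "P.prob G = 1"
  proof -
    have "emeasure P G = (\<Prod>i\<in>B. emeasure (M i) {1..n})"
      unfolding P_def' G_def using finB Mprob setsM by (simp add: emeasure_PiM_emb)
    also have "\<dots> = (\<Prod>i\<in>B. 1)"
      unfolding M_def using npos by (intro prod.cong refl) (simp add: measure_pmf.emeasure_eq_measure measure_pmf_of_set)
    finally show ?thesis by (simp add: P.emeasure_eq_measure)
  qed
  have ln3: "ln 3 \<ge> (0::real)" by simp
  have lnn: "ln (real n) \<ge> 1"
  proof -
    have "exp 1 \<le> real n" using e_less_272 assms(2) by linarith
    thus ?thesis using npos by (metis exp_gt_zero ln_exp ln_le_cancel_iff of_nat_0_less_iff)
  qed
  have cl: "c * ln (real n) \<ge> 1 * 1" using lnn assms(1) by (intro mult_mono) auto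
  have b3: "b \<ge> 3" unfolding b_def using ln3 cl by linarith
  have X'sub: "{f} \<subseteq> PiE B (\<lambda>_. UNIV)" if "f \<in> X'" for f
    using that unfolding X'_def by (auto simp: PiE_iff)
  have bad_sub: "space P - good \<subseteq> (\<Union>f\<in>X'. prod_emb UNIV M B {f}) \<union> (space P - G)"
  proof
    fix k assume k: "k \<in> space P - good"
    show "k \<in> (\<Union>f\<in>X'. prod_emb UNIV M B {f}) \<union> (space P - G)"
    proof (cases "k \<in> G")
      case True
      hence kin: "restrict k B \<in> PiE B (\<lambda>_. {1..n})" unfolding G_def emb_eq by auto
      have "real (R k) > b" using k unfolding good_def by auto
      moreover have "real_of_int \<lfloor>b\<rfloor> \<le> b" by (rule of_int_floor_le)
      ultimately have "real_of_int \<lfloor>b\<rfloor> < real_of_int (int (R k))" using of_int_of_nat_eq by linarith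
      hence "\<lfloor>b\<rfloor> < int (R k)" by (simp only: of_int_less_iff)
      moreover have "0 \<le> \<lfloor>b\<rfloor>" using b3 by simp
      ultimately have "r \<le> R k" unfolding r_def by (rule nat_floor_aux)
      hence "restrict k B \<in> X'" using kin RR unfolding X'_def by auto
      thus ?thesis unfolding emb_eq by auto
    qed (use k in auto)
  qed
  have "P.prob (space P - good) \<le> P.prob ((\<Union>f\<in>X'. prod_emb UNIV M B {f}) \<union> (space P - G))"
    using finX' G_ev X'sub by (intro P.finite_measure_mono[OF bad_sub] sets.Un sets.finite_UN setsEmb sets.compl_sets) auto
  also have "\<dots> \<le> P.prob (\<Union>f\<in>X'. prod_emb UNIV M B {f}) + P.prob (space P - G)"
    by (rule measure_Un_le) (use finX' G_ev in \<open>auto intro!: sets.finite_UN setsEmb X'sub\<close>)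
  also have "P.prob (space P - G) = 0" using P.prob_compl[OF G_ev] G1 by simp
  also have "P.prob (\<Union>f\<in>X'. prod_emb UNIV M B {f}) \<le> (\<Sum>f\<in>X'. P.prob (prod_emb UNIV M B {f}))"
    by (rule measure_UNION_le) (use finX' in \<open>auto intro!: setsEmb X'sub\<close>)
  also have "\<dots> = real (card X') * (1 / real n) ^ m" using emb_single by simp
  finally have bad_le: "P.prob (space P - good) \<le> real (card X') * (1 / real n) ^ m" by simp
  have mq: "real m \<le> sqrt (real n)"
  proof -
    have "real qbar = 4 * real m" unfolding m_def using assms(4) by (auto elim!: dvdE)
    thus ?thesis using assms(5) by simp
  qed
  have m2: "m * m \<le> n"
  proof -
    have "real m * real m \<le> sqrt (real n) * sqrt (real n)" using mq by (intro mult_mono) auto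
    thus ?thesis by (simp flip: of_nat_mult)
  qed
  have cardX: "card X' \<le> (m choose r) * m^r * n^(m-r)"
    unfolding X'_def B_def R_def by (rule count_bound)
  have natb: "card X' * fact r \<le> n ^ m"
  proof (cases "r \<le> m")
    case False
    thus ?thesis using cardX by (simp add: binomial_eq_0)
  next
    case True
    have "card X' * fact r \<le> (m choose r) * fact r * m^r * n^(m-r)"
      using cardX by (simp add: mult_ac)
    also have "\<dots> \<le> m^r * m^r * n^(m-r)"
      using binomial_fact_pow[of m r] by (intro mult_right_mono) auto
    also have "\<dots> = (m*m)^r * n^(m-r)" by (simp add: power_mult_distrib)
    also have "\<dots> \<le> n^r * n^(m-r)" using m2 by (intro mult_right_mono power_mono) auto
    also have "\<dots> = n^m" using True by (simp flip: power_add)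
    finally show ?thesis .
  qed
  have "real (card X') * (1 / real n) ^ m \<le> 1 / fact r"
  proof -
    have "real (card X') * fact r \<le> real n ^ m" using natb by (metis of_nat_fact of_nat_le_iff of_nat_mult of_nat_power)
    thus ?thesis using npos by (simp add: field_simps power_divide)
  qed
  have rb: "real r > b" unfolding r_def using b3 by linarith
  have r4: "r \<ge> 4" using rb b3 by linarith
  have "exp (b - 1) \<le> exp (real r - 1)" using rb by simp
  also have "\<dots> \<le> fact r" using exp_le_fact[OF r4] .
  finally have ef: "exp (b - 1) \<le> fact r" .
  have eb: "exp (b - 1) = 3 * real n powr (2 * c)"
    unfolding b_def using npos by (simp add: exp_add powr_def)
  have "1 / fact r \<le> 1 / exp (b - 1)" using ef by (intro divide_left_mono) auto
  also have "\<dots> = (1/3) * real n powr (-2 * c)" unfolding eb by (simp add: powr_minus_divide)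
  finally have fin: "1 / fact r \<le> (1/3) * real n powr (-2 * c)" .
  have "P.prob good = 1 - P.prob (space P - good)"
    using P.prob_compl[OF good_ev] good_def by (simp add: Diff_Diff_Int Int_absorb1)
  hence "P.prob good \<ge> 1 - (1/3) * real n powr (-2 * c)"
    using bad_le \<open>real (card X') * (1 / real n) ^ m \<le> 1 / fact r\<close> fin by linarith
  thus ?thesis unfolding good_def P_def R_def m_def b_def by simp
qed

end
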